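(* For $0\le k<n$, the function $\frac{S_{k+1}}{S_k}$ belongs to $\mathcal{S}_n$, where $S_k(x_1,\dots,x_n)=\binom{n}{k}^{-1}\sum_{1\le i_1<\dots<i_k\le n}x_{i_1}\cdots x_{i_k}$ for $k=1,\dots,n$ and $S_0=1$.
   Context: $\Gamma_+=\{x\in\mathbb{R}^n: x_i>0\ \forall i\}$. $\mathcal{C}_n$ is the class of functions $f:\Gamma_+\to\mathbb{R}$ which are $C^\infty$, homogeneous of degree one, strictly monotone increasing ($\partial f/\partial x_i>0$ for each $i$), concave, and inverse-concave, meaning $f^*(x_1,\dots,x_n)=-f(x_1^{-1},\dots,x_n^{-1})$ is concave on $\Gamma_+$. $\mathcal{S}_n$ is the subclass of symmetric functions (invariant under permutations of the arguments) in $\mathcal{C}_n$. *)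

theory Defs
  imports "HOL-Analysis.Analysis"
begin

definition pos_cone :: "(real ^ 'n) set" where
  "pos_cone = {x. \<forall>i. x $ i > 0}"

definition partial :: "'n::finite \<Rightarrow> (real ^ 'n \<Rightarrow> real) \<Rightarrow> real ^ 'n \<Rightarrow> real" where
  "partial i f x = frechet_derivative f (at x) (axis i 1)"

fun Ck_on :: "nat \<Rightarrow> (real ^ 'n::finite) set \<Rightarrow> (real ^ 'n \<Rightarrow> real) \<Rightarrow> bool" where
  "Ck_on 0 S f = continuous_on S f"
| "Ck_on (Suc m) S f =
     ((\<forall>x\<in>S. f differentiable (at x)) \<and> (\<forall>i. Ck_on m S (partial i f)))"

definition smooth_on :: "(real ^ 'n::finite) set \<Rightarrow> (real ^ 'n \<Rightarrow> real) \<Rightarrow> bool" where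
  "smooth_on S f = (\<forall>m. Ck_on m S f)"

definition class_C :: "(real ^ 'n::finite \<Rightarrow> real) \<Rightarrow> bool" where
  "class_C f \<longleftrightarrow>
     smooth_on pos_cone f
   \<and> (\<forall>x\<in>pos_cone. \<forall>t>0. f (t *\<^sub>R x) = t * f x)
   \<and> (\<forall>x\<in>pos_cone. \<forall>i. partial i f x > 0)
   \<and> concave_on pos_cone f
   \<and> concave_on pos_cone (\<lambda>x. - f (\<chi> i. inverse (x $ i)))"

definition class_S :: "(real ^ 'n::finite \<Rightarrow> real) \<Rightarrow> bool" where
  "class_S f \<longleftrightarrow> class_C f \<and>
     (\<forall>p x. p permutes (UNIV :: 'n set) \<longrightarrow> x \<in> pos_cone \<longrightarrow> f (\<chi> i. x $ p i) = f x)"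

definition esym_norm :: "nat \<Rightarrow> real ^ 'n::finite \<Rightarrow> real" where
  "esym_norm k x = (\<Sum>I\<in>{I. I \<subseteq> (UNIV :: 'n set) \<and> card I = k}. \<Prod>i\<in>I. x $ i)
                    / real (CARD('n) choose k)"

end

theory Submission
  imports Defs
begin


definition es :: "'a set \<Rightarrow> nat \<Rightarrow> ('a \<Rightarrow> real) \<Rightarrow> real" where
  "es A k x = (\<Sum>I\<in>{I. I \<subseteq> A \<and> card I = k}. \<Prod>i\<in>I. x i)"

lemma es_finite_set: "finite A \<Longrightarrow> finite {I. I \<subseteq> A \<and> card I = k}"
  by (rule finite_subset[of _ "Pow A"]) auto

lemma es_0: "finite A \<Longrightarrow> es A 0 x = 1"
proof -
  assume "finite A"
  then have "{I. I \<subseteq> A \<and> card I = 0} = {{}}" by (auto dest: finite_subset)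
  then show ?thesis by (simp add: es_def)
qed

lemma es_empty_Suc: "es {} (Suc k) x = 0"
  by (simp add: es_def)

lemma es_cong: "(\<And>i. i \<in> A \<Longrightarrow> x i = y i) \<Longrightarrow> es A k x = es A k y"
  unfolding es_def by (intro sum.cong refl prod.cong) auto

lemma es_pos:
  assumes "finite A" "k \<le> card A" "\<And>i. i \<in> A \<Longrightarrow> x i > 0"
  shows "es A k x > 0"
proof -
  obtain T where T: "T \<subseteq> A" "card T = k" using obtain_subset_with_card_n[OF assms(2)] by metis
  show ?thesis unfolding es_def
  proof (rule sum_pos)
    show "finite {I. I \<subseteq> A \<and> card I = k}" using es_finite_set[OF assms(1)] .
    show "{I. I \<subseteq> A \<and> card I = k} \<noteq> {}" using T by auto
    fix I assume "I \<in> {I. I \<subseteq> A \<and> card I = k}"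
    then show "0 < (\<Prod>i\<in>I. x i)" using assms(3) by (intro prod_pos) auto
  qed
qed

lemma es_rec:
  assumes "finite A" "a \<notin> A"
  shows "es (insert a A) (Suc k) x = x a * es A k x + es A (Suc k) x"
proof -
  have split: "{I. I \<subseteq> insert a A \<and> card I = Suc k} =
      {I. I \<subseteq> A \<and> card I = Suc k} \<union> insert a ` {J. J \<subseteq> A \<and> card J = k}"
  proof (rule set_eqI, rule iffI)
    fix I assume I: "I \<in> {I. I \<subseteq> insert a A \<and> card I = Suc k}"
    show "I \<in> {I. I \<subseteq> A \<and> card I = Suc k} \<union> insert a ` {J. J \<subseteq> A \<and> card J = k}"
    proof (cases "a \<in> I")
      case True
      have "finite I" using I assms(1) by (auto dest: finite_subset)
      then have "card (I - {a}) = k" using I True by auto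
      moreover have "I = insert a (I - {a})" using True by auto
      ultimately show ?thesis using I by blast
    next
      case False then show ?thesis using I by auto
    qed
  next
    fix I assume "I \<in> {I. I \<subseteq> A \<and> card I = Suc k} \<union> insert a ` {J. J \<subseteq> A \<and> card J = k}"
    then show "I \<in> {I. I \<subseteq> insert a A \<and> card I = Suc k}"
    proof
      assume "I \<in> insert a ` {J. J \<subseteq> A \<and> card J = k}"
      then obtain J where J: "J \<subseteq> A" "card J = k" "I = insert a J" by auto
      have "finite J" using J assms(1) by (auto dest: finite_subset)
      moreover have "a \<notin> J" using J assms(2) by auto
      ultimately show ?thesis using J by auto
    qed auto
  qed
  have disj: "{I. I \<subseteq> A \<and> card I = Suc k} \<inter> insert a ` {J. J \<subseteq> A \<and> card J = k} = {}"
    using assms(2) by auto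
  have inj: "inj_on (insert a) {J. J \<subseteq> A \<and> card J = k}"
    unfolding inj_on_def
  proof (intro ballI impI)
    fix J1 J2 assume "J1 \<in> {J. J \<subseteq> A \<and> card J = k}" "J2 \<in> {J. J \<subseteq> A \<and> card J = k}"
      "insert a J1 = insert a J2"
    then show "J1 = J2" using assms(2)
      by (metis (no_types, lifting) Diff_insert_absorb mem_Collect_eq subset_iff)
  qed
  have "es (insert a A) (Suc k) x = es A (Suc k) x + (\<Sum>I\<in>insert a ` {J. J \<subseteq> A \<and> card J = k}. \<Prod>i\<in>I. x i)"
    unfolding es_def split
    by (rule sum.union_disjoint) (auto simp: es_finite_set assms disj)
  also have "(\<Sum>I\<in>insert a ` {J. J \<subseteq> A \<and> card J = k}. \<Prod>i\<in>I. x i)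
      = (\<Sum>J\<in>{J. J \<subseteq> A \<and> card J = k}. \<Prod>i\<in>insert a J. x i)"
    by (rule sum.reindex[OF inj, unfolded comp_def])
  also have "\<dots> = (\<Sum>J\<in>{J. J \<subseteq> A \<and> card J = k}. x a * (\<Prod>i\<in>J. x i))"
  proof (rule sum.cong[OF refl])
    fix J assume "J \<in> {J. J \<subseteq> A \<and> card J = k}"
    then have "finite J" "a \<notin> J" using assms by (auto dest: finite_subset)
    then show "(\<Prod>i\<in>insert a J. x i) = x a * (\<Prod>i\<in>J. x i)" by simp
  qed
  also have "\<dots> = x a * es A k x" by (simp add: es_def sum_distrib_left)
  finally show ?thesis by simp
qed

lemma es_rec':
  assumes "finite A" "a \<in> A"
  shows "es A (Suc k) x = x a * es (A - {a}) k x + es (A - {a}) (Suc k) x"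
  using es_rec[of "A - {a}" a k x] assms by (simp add: insert_absorb)

lemma es_euler:
  assumes "finite A"
  shows "real (Suc k) * es A (Suc k) x = (\<Sum>i\<in>A. x i * es (A - {i}) k x)"
  using assms
proof (induction A arbitrary: k rule: finite_induct)
  case empty
  then show ?case by (simp add: es_empty_Suc)
next
  case (insert a A)
  have eq: "\<And>i m. i \<in> A \<Longrightarrow> es (insert a A - {i}) m x = es (insert a (A - {i})) m x"
    using insert by (metis insert_Diff_if singletonD)
  have eqa: "insert a A - {a} = A" using insert by auto
  have "(\<Sum>i\<in>insert a A. x i * es (insert a A - {i}) k x)
      = x a * es A k x + (\<Sum>i\<in>A. x i * es (insert a (A - {i})) k x)"
    using insert eq eqa by (simp add: sum.insert)
  also have "\<dots> = real (Suc k) * es (insert a A) (Suc k) x"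
  proof (cases k)
    case 0
    have "(\<Sum>i\<in>A. x i * es (insert a (A - {i})) 0 x) = (\<Sum>i\<in>A. x i)"
      using insert by (simp add: es_0)
    also have "\<dots> = es A 1 x" using insert.IH[of 0] insert by (simp add: es_0)
    finally show ?thesis using 0 es_rec[OF insert(1,2), of 0 x] insert by (simp add: es_0)
  next
    case (Suc m)
    have "(\<Sum>i\<in>A. x i * es (insert a (A - {i})) k x)
       = (\<Sum>i\<in>A. x a * (x i * es (A - {i}) m x) + x i * es (A - {i}) (Suc m) x)"
      using insert Suc by (intro sum.cong refl) (simp add: es_rec algebra_simps)
    also have "\<dots> = x a * (real (Suc m) * es A (Suc m) x) + real (Suc (Suc m)) * es A (Suc (Suc m)) x"
      using insert.IH[of m] insert.IH[of "Suc m"]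
      by (simp add: sum.distrib sum_distrib_left)
    finally show ?thesis using Suc es_rec[OF insert(1,2), of "Suc m" x] es_rec[OF insert(1,2), of m x]
      by (simp add: algebra_simps)
  qed
  finally show ?case by simp
qed




definition H :: "real \<Rightarrow> real \<Rightarrow> real" where "H a b = a * b / (a + b)"

lemma H_pos: "0 < a \<Longrightarrow> 0 < b \<Longrightarrow> 0 < H a b"
  by (simp add: H_def)

lemma H_mono: assumes "0 < a" "0 < b" "b \<le> b'" shows "H a b \<le> H a b'"
proof -
  have "a * b * (a + b') \<le> a * b' * (a + b)"
    using assms by (simp add: algebra_simps mult_left_mono mult_right_mono power2_eq_square)
  then show ?thesis using assms unfolding H_def by (simp add: divide_simps)
qed

lemma H_strict: assumes "0 < a" "a < a'" "0 < b" shows "H a b < H a' b"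
proof -
  have "a * b * (a' + b) < a' * b * (a + b)"
    using assms by (simp add: algebra_simps mult_strict_right_mono power2_eq_square)
  then show ?thesis using assms unfolding H_def by (simp add: divide_simps)
qed

lemma H_super:
  assumes "0 < a1" "0 < a2" "0 < b1" "0 < b2"
  shows "H a1 b1 + H a2 b2 \<le> H (a1 + a2) (b1 + b2)"
proof -
  have key: "(a1*b1*(a2+b2) + a2*b2*(a1+b1)) * (a1+a2+b1+b2) \<le> (a1+a2)*(b1+b2)*((a1+b1)*(a2+b2))"
  proof -
    have "(a1+a2)*(b1+b2)*((a1+b1)*(a2+b2)) - (a1*b1*(a2+b2) + a2*b2*(a1+b1)) * (a1+a2+b1+b2)
        = (a1*b2 - a2*b1)^2"
      by (simp add: algebra_simps power2_eq_square)
    then show ?thesis by (smt (verit) zero_le_power2)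
  qed
  have "H a1 b1 + H a2 b2 = (a1*b1*(a2+b2) + a2*b2*(a1+b1)) / ((a1+b1)*(a2+b2))"
    using assms by (simp add: H_def field_simps)
  also have "\<dots> \<le> (a1+a2)*(b1+b2) / (a1+a2+b1+b2)"
    using assms key by (simp add: divide_simps)
  also have "\<dots> = H (a1 + a2) (b1 + b2)" by (simp add: H_def add.assoc add.left_commute)
  finally show ?thesis .
qed

definition F :: "'a set \<Rightarrow> nat \<Rightarrow> ('a \<Rightarrow> real) \<Rightarrow> real" where
  "F A k x = es A (Suc k) x / es A k x"

lemma F_cong: "(\<And>i. i \<in> A \<Longrightarrow> x i = y i) \<Longrightarrow> F A k x = F A k y"
  unfolding F_def using es_cong[of A x y] by simp

lemma F_pos: "finite A \<Longrightarrow> Suc k \<le> card A \<Longrightarrow> (\<And>i. i \<in> A \<Longrightarrow> x i > 0) \<Longrightarrow> F A k x > 0"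
  unfolding F_def by (intro divide_pos_pos es_pos) auto

lemma F_0: "finite A \<Longrightarrow> F A 0 x = (\<Sum>i\<in>A. x i)"
  using es_euler[of A 0 x] by (simp add: F_def es_0)

lemma F_rec:
  assumes "finite A" "Suc (Suc k) \<le> card A" "\<And>i. i \<in> A \<Longrightarrow> x i > 0"
  shows "real (Suc (Suc k)) * F A (Suc k) x = (\<Sum>i\<in>A. H (x i) (F (A - {i}) k x))"
proof -
  have E: "es A (Suc k) x > 0" using assms by (intro es_pos) auto
  have "real (Suc (Suc k)) * F A (Suc k) x = (\<Sum>i\<in>A. x i * es (A - {i}) (Suc k) x) / es A (Suc k) x"
    unfolding F_def es_euler[OF assms(1), symmetric] by simp
  also have "\<dots> = (\<Sum>i\<in>A. x i * es (A - {i}) (Suc k) x / es A (Suc k) x)"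
    by (simp add: sum_divide_distrib)
  also have "\<dots> = (\<Sum>i\<in>A. H (x i) (F (A - {i}) k x))"
  proof (rule sum.cong[OF refl])
    fix i assume i: "i \<in> A"
    have c: "card (A - {i}) = card A - 1" using i assms(1) by simp
    have p0: "es (A - {i}) k x > 0" using assms i c by (intro es_pos) auto
    have p1: "es (A - {i}) (Suc k) x > 0" using assms i c by (intro es_pos) auto
    have xi: "x i > 0" using assms i by auto
    show "x i * es (A - {i}) (Suc k) x / es A (Suc k) x = H (x i) (F (A - {i}) k x)"
      unfolding es_rec'[OF assms(1) i] H_def F_def using p0 p1 xi
      by (simp add: field_simps)
  qed
  finally show ?thesis .
qed

lemma F_super:
  assumes "finite A" "Suc k \<le> card A" "\<And>i. i \<in> A \<Longrightarrow> x i > 0" "\<And>i. i \<in> A \<Longrightarrow> y i > 0"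
  shows "F A k x + F A k y \<le> F A k (\<lambda>i. x i + y i)"
  using assms
proof (induction k arbitrary: A)
  case 0
  then show ?case by (simp add: F_0 sum.distrib)
next
  case (Suc k)
  let ?z = "\<lambda>i. x i + y i"
  have zp: "\<And>i. i \<in> A \<Longrightarrow> ?z i > 0" using Suc.prems by (simp add: add_pos_pos)
  have "real (Suc (Suc k)) * (F A (Suc k) x + F A (Suc k) y)
      = (\<Sum>i\<in>A. H (x i) (F (A - {i}) k x) + H (y i) (F (A - {i}) k y))"
    using F_rec[of A k x] F_rec[of A k y] Suc.prems by (simp add: sum.distrib algebra_simps)
  also have "\<dots> \<le> (\<Sum>i\<in>A. H (?z i) (F (A - {i}) k ?z))"
  proof (rule sum_mono)
    fix i assume i: "i \<in> A"
    have c: "Suc k \<le> card (A - {i})" using i Suc.prems by simp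
    have fx: "F (A - {i}) k x > 0" using c Suc.prems by (intro F_pos) auto
    have fy: "F (A - {i}) k y > 0" using c Suc.prems by (intro F_pos) auto
    have "H (x i) (F (A - {i}) k x) + H (y i) (F (A - {i}) k y)
        \<le> H (?z i) (F (A - {i}) k x + F (A - {i}) k y)"
      using H_super fx fy Suc.prems i by auto
    also have "\<dots> \<le> H (?z i) (F (A - {i}) k ?z)"
      using Suc.IH[of "A - {i}"] Suc.prems c zp i fx fy by (intro H_mono) auto
    finally show "H (x i) (F (A - {i}) k x) + H (y i) (F (A - {i}) k y) \<le> H (?z i) (F (A - {i}) k ?z)" .
  qed
  also have "\<dots> = real (Suc (Suc k)) * F A (Suc k) ?z"
    using F_rec[of A k ?z] Suc.prems zp by simp
  finally show ?case by simp
qed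

lemma F_strict:
  assumes "finite A" "Suc k \<le> card A" "\<And>i. i \<in> A \<Longrightarrow> x i > 0" "\<And>i. i \<in> A \<Longrightarrow> y i > 0"
    "j \<in> A" "x j < y j" "\<And>i. i \<in> A \<Longrightarrow> i \<noteq> j \<Longrightarrow> x i = y i"
  shows "F A k x < F A k y"
  using assms
proof (induction k arbitrary: A)
  case 0
  have "(\<Sum>i\<in>A. x i) < (\<Sum>i\<in>A. y i)"
    using 0 by (intro sum_strict_mono_ex1) (auto, metis order.order_iff_strict)
  then show ?case using 0 by (simp add: F_0)
next
  case (Suc k)
  have "real (Suc (Suc k)) * F A (Suc k) x = (\<Sum>i\<in>A. H (x i) (F (A - {i}) k x))"
    using F_rec[of A k x] Suc.prems by simp
  also have "\<dots> < (\<Sum>i\<in>A. H (y i) (F (A - {i}) k y))"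
  proof (rule sum_strict_mono_ex1)
    show "finite A" by fact
    have le: "H (x i) (F (A - {i}) k x) \<le> H (y i) (F (A - {i}) k y)" if i: "i \<in> A" "i \<noteq> j" for i
    proof -
      have c: "Suc k \<le> card (A - {i})" using i Suc.prems by simp
      have fx: "F (A - {i}) k x > 0" using c Suc.prems by (intro F_pos) auto
      have "F (A - {i}) k x < F (A - {i}) k y"
        using Suc.IH[of "A - {i}"] Suc.prems c i by auto
      then have "H (x i) (F (A - {i}) k x) \<le> H (x i) (F (A - {i}) k y)"
        using fx Suc.prems i by (intro H_mono) auto
      then show ?thesis using Suc.prems i by simp
    qed
    have lt: "H (x j) (F (A - {j}) k x) < H (y j) (F (A - {j}) k y)"
    proof -
      have c: "Suc k \<le> card (A - {j})" using Suc.prems by simp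
      have fx: "F (A - {j}) k x > 0" using c Suc.prems by (intro F_pos) auto
      have "F (A - {j}) k x = F (A - {j}) k y" using Suc.prems by (intro F_cong) auto
      then show ?thesis using H_strict[of "x j" "y j" "F (A - {j}) k x"] fx Suc.prems by simp
    qed
    show "\<forall>i\<in>A. H (x i) (F (A - {i}) k x) \<le> H (y i) (F (A - {i}) k y)"
      using le lt by (metis order.strict_implies_order)
    show "\<exists>a\<in>A. H (x a) (F (A - {a}) k x) < H (y a) (F (A - {a}) k y)"
      using lt Suc.prems by blast
  qed
  also have "\<dots> = real (Suc (Suc k)) * F A (Suc k) y"
    using F_rec[of A k y] Suc.prems by simp
  finally show ?case by simp
qed




lemma es_homog: "es A k (\<lambda>i. t * x i) = t ^ k * es A k x"
  unfolding es_def sum_distrib_left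
  by (intro sum.cong refl) (simp add: prod.distrib)

lemma es_inv:
  assumes "finite A" "m \<le> card A" "\<And>i. i \<in> A \<Longrightarrow> x i \<noteq> 0"
  shows "es A m (\<lambda>i. inverse (x i)) = es A (card A - m) x / (\<Prod>i\<in>A. x i)"
proof -
  have "es A m (\<lambda>i. inverse (x i)) = (\<Sum>J\<in>{J. J \<subseteq> A \<and> card J = card A - m}. (\<Prod>i\<in>J. x i) / (\<Prod>i\<in>A. x i))"
    unfolding es_def
  proof (rule sum.reindex_bij_witness[where i="\<lambda>J. A - J" and j="\<lambda>I. A - I"])
    fix I assume I: "I \<in> {I. I \<subseteq> A \<and> card I = m}"
    show "A - (A - I) = I" using I by auto
    have "finite I" using I assms(1) by (auto dest: finite_subset)
    show "A - I \<in> {J. J \<subseteq> A \<and> card J = card A - m}" using I assms(1) \<open>finite I\<close>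
      by (auto simp: card_Diff_subset)
    have sp: "(\<Prod>i\<in>A. x i) = (\<Prod>i\<in>A - I. x i) * (\<Prod>i\<in>I. x i)"
      using I assms(1) by (metis (no_types, lifting) mem_Collect_eq prod.subset_diff)
    have nz: "(\<Prod>i\<in>I. x i) \<noteq> 0" "(\<Prod>i\<in>A - I. x i) \<noteq> 0"
      using I assms \<open>finite I\<close> by (auto simp: prod_zero_iff)
    show "(\<Prod>i\<in>A - I. x i) / (\<Prod>i\<in>A. x i) = (\<Prod>i\<in>I. inverse (x i))"
    proof -
      have "(\<Prod>i\<in>I. inverse (x i)) = inverse (\<Prod>i\<in>I. x i)"
        by (induction I rule: infinite_finite_induct) auto
      then show ?thesis unfolding sp using nz by (simp add: field_simps)
    qed
  next
    fix J assume J: "J \<in> {J. J \<subseteq> A \<and> card J = card A - m}"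
    show "A - (A - J) = J" using J by auto
    have "finite J" using J assms(1) by (auto dest: finite_subset)
    then show "A - J \<in> {I. I \<subseteq> A \<and> card I = m}" using J assms(1,2)
      by (auto simp: card_Diff_subset card_mono)
  qed
  then show ?thesis unfolding es_def by (simp add: sum_divide_distrib)
qed

lemma es_perm:
  fixes p :: "'a \<Rightarrow> 'a"
  assumes "bij p"
  shows "es UNIV k (\<lambda>i. x (p i)) = es UNIV k x"
  unfolding es_def
proof (rule sum.reindex_bij_witness[where i="\<lambda>J. inv p ` J" and j="\<lambda>I. p ` I"])
  fix I :: "'a set" assume I: "I \<in> {I. I \<subseteq> UNIV \<and> card I = k}"
  show "inv p ` p ` I = I" using assms by (simp add: bij_is_inj image_inv_f_f)
  have "inj p" using assms bij_is_inj by auto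
  then show "p ` I \<in> {J. J \<subseteq> UNIV \<and> card J = k}" using I by (simp add: card_image inj_on_subset)
  show "(\<Prod>i\<in>p ` I. x i) = (\<Prod>i\<in>I. x (p i))"
    using \<open>inj p\<close> by (simp add: prod.reindex inj_on_subset)
next
  fix J :: "'a set" assume J: "J \<in> {J. J \<subseteq> UNIV \<and> card J = k}"
  show "p ` inv p ` J = J" using assms by (simp add: bij_is_surj image_f_inv_f)
  have "inj (inv p)" using assms bij_imp_bij_inv bij_is_inj by blast
  then show "inv p ` J \<in> {I. I \<subseteq> UNIV \<and> card I = k}" using J by (simp add: card_image inj_on_subset)
qed




inductive polyfun :: "(real ^ 'n::finite \<Rightarrow> real) \<Rightarrow> bool" where
  pf_const: "polyfun (\<lambda>x. c)"
| pf_coord: "polyfun (\<lambda>x. x $ i)"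
| pf_add: "polyfun p \<Longrightarrow> polyfun q \<Longrightarrow> polyfun (\<lambda>x. p x + q x)"
| pf_mult: "polyfun p \<Longrightarrow> polyfun q \<Longrightarrow> polyfun (\<lambda>x. p x * q x)"

lemma partial_eq: "(f has_derivative D) (at x) \<Longrightarrow> partial i f x = D (axis i 1)"
  unfolding partial_def using frechet_derivative_at by metis

lemma partial_works: "f differentiable (at x) \<Longrightarrow> (f has_derivative (frechet_derivative f (at x))) (at x)"
  using frechet_derivative_works by blast

lemma polyfun_props:
  "polyfun p \<Longrightarrow> (\<forall>x. p differentiable (at x)) \<and> (\<forall>i. polyfun (partial i p))"
proof (induction rule: polyfun.induct)
  case (pf_const c)
  have eq: "partial i (\<lambda>x. c) = (\<lambda>x. 0)" for i
    by (rule ext, rule partial_eq) (rule has_derivative_const)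
  show ?case
  proof (intro conjI allI)
    fix x :: "real^'a" show "(\<lambda>a. c) differentiable at x" by simp
  next
    fix i show "polyfun (partial i (\<lambda>a::real^'a. c))" unfolding eq by (rule pf_const)
  qed
next
  case (pf_coord j)
  have d: "((\<lambda>x::real^'a. x $ j) has_derivative (\<lambda>x. x $ j)) (at x)" for x
    by (rule bounded_linear_imp_has_derivative) (rule bounded_linear_vec_nth)
  have "partial i (\<lambda>x::real^'a. x $ j) = (\<lambda>x. axis i 1 $ j)" for i
    by (rule ext, rule partial_eq, rule d)
  then show ?case using d by (auto intro: polyfun.intros simp: differentiable_def)
next
  case (pf_add p q)
  have "partial i (\<lambda>x. p x + q x) = (\<lambda>x. partial i p x + partial i q x)" for i
  proof
    fix x
    have D: "((\<lambda>x. p x + q x) has_derivative (\<lambda>h. frechet_derivative p (at x) h + frechet_derivative q (at x) h)) (at x)"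
      using pf_add by (intro has_derivative_add partial_works) auto
    show "partial i (\<lambda>x. p x + q x) x = partial i p x + partial i q x"
      by (subst partial_eq[OF D]) (simp add: partial_def)
  qed
  then show ?case using pf_add by (auto intro: polyfun.intros differentiable_add)
next
  case (pf_mult p q)
  have "partial i (\<lambda>x. p x * q x) = (\<lambda>x. p x * partial i q x + partial i p x * q x)" for i
  proof
    fix x
    have D: "((\<lambda>x. p x * q x) has_derivative (\<lambda>h. p x * frechet_derivative q (at x) h + frechet_derivative p (at x) h * q x)) (at x)"
      using pf_mult by (intro has_derivative_mult partial_works) auto
    show "partial i (\<lambda>x. p x * q x) x = p x * partial i q x + partial i p x * q x"
      by (subst partial_eq[OF D]) (simp add: partial_def)
  qed
  then show ?case using pf_mult by (auto intro!: polyfun.intros differentiable_mult)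
qed

lemma polyfun_sum: "(\<And>I. I \<in> S \<Longrightarrow> polyfun (g I)) \<Longrightarrow> polyfun (\<lambda>x. \<Sum>I\<in>S. g I x)"
proof (induction S rule: infinite_finite_induct)
  case (infinite A) then show ?case by (simp add: pf_const)
next
  case empty then show ?case by (simp add: pf_const)
next
  case (insert a A) then show ?case by (simp add: pf_add)
qed

lemma polyfun_prod: "(\<And>I. I \<in> S \<Longrightarrow> polyfun (g I)) \<Longrightarrow> polyfun (\<lambda>x. \<Prod>I\<in>S. g I x)"
proof (induction S rule: infinite_finite_induct)
  case (infinite A) then show ?case by (simp add: pf_const)
next
  case empty then show ?case by (simp add: pf_const)
next
  case (insert a A) then show ?case by (simp add: pf_mult)
qed

lemma polyfun_esym: "polyfun (esym_norm k :: real^'n::finite \<Rightarrow> real)"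
proof -
  have e: "(esym_norm k :: real^'n::finite \<Rightarrow> real) = (\<lambda>x. (\<Sum>I\<in>{I. I \<subseteq> UNIV \<and> card I = k}. \<Prod>i\<in>I. x $ i) * inverse (real (CARD('n) choose k)))"
    by (rule ext) (simp add: esym_norm_def divide_inverse)
  show ?thesis unfolding e
    by (intro pf_mult pf_const polyfun_sum polyfun_prod pf_coord)
qed

lemma polyfun_power: "polyfun p \<Longrightarrow> polyfun (\<lambda>x. p x ^ m)"
proof (induction m)
  case 0 then show ?case using pf_const[of 1] by simp
next
  case (Suc m) then show ?case using pf_mult[of p "\<lambda>x. p x ^ m"] by simp
qed

lemma partial_cong:
  assumes "open S" "x \<in> S" "\<And>y. y \<in> S \<Longrightarrow> f y = g y"
  shows "partial i f x = partial i g x"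
proof -
  have "(\<lambda>D. (f has_derivative D) (at x)) = (\<lambda>D. (g has_derivative D) (at x))"
  proof (rule ext, rule iffI)
    fix D assume "(f has_derivative D) (at x)"
    then show "(g has_derivative D) (at x)"
      by (rule has_derivative_transform_within_open[OF _ assms(1,2)]) (use assms(3) in auto)
  next
    fix D assume "(g has_derivative D) (at x)"
    then show "(f has_derivative D) (at x)"
      by (rule has_derivative_transform_within_open[OF _ assms(1,2)]) (use assms(3) in auto)
  qed
  then show ?thesis unfolding partial_def frechet_derivative_def by (simp only:)
qed

lemma differentiable_cong:
  assumes "open S" "x \<in> S" "\<And>y. y \<in> S \<Longrightarrow> f y = g y" "f differentiable (at x)"
  shows "g differentiable (at x)"
proof -
  obtain D where "(f has_derivative D) (at x)" using assms(4) unfolding differentiable_def by blast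
  then have "(g has_derivative D) (at x)"
    by (rule has_derivative_transform_within_open[OF _ assms(1,2)]) (use assms(3) in auto)
  then show ?thesis unfolding differentiable_def by blast
qed

lemma Ck_cong:
  assumes "open S" "\<And>y. y \<in> S \<Longrightarrow> f y = g y"
  shows "Ck_on m S f = Ck_on m S g"
  using assms(2)
proof (induction m arbitrary: f g)
  case 0
  have "continuous_on S f = continuous_on S g" by (rule continuous_on_cong[OF refl]) (use 0 in blast)
  then show ?case by simp
next
  case (Suc m)
  have sy: "\<And>y. y \<in> S \<Longrightarrow> g y = f y" using Suc.prems by simp
  have d: "(\<forall>x\<in>S. f differentiable (at x)) = (\<forall>x\<in>S. g differentiable (at x))"
  proof (intro iffI ballI)
    fix x assume "\<forall>x\<in>S. f differentiable (at x)" "x \<in> S"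
    then show "g differentiable (at x)"
      by (intro differentiable_cong[of S x f g]) (use assms(1) Suc.prems in auto)
  next
    fix x assume "\<forall>x\<in>S. g differentiable (at x)" "x \<in> S"
    then show "f differentiable (at x)"
      by (intro differentiable_cong[of S x g f]) (use assms(1) sy in auto)
  qed
  have "Ck_on m S (partial i f) = Ck_on m S (partial i g)" for i
  proof (rule Suc.IH)
    fix y assume "y \<in> S"
    then show "partial i f y = partial i g y" by (rule partial_cong[OF assms(1) _ Suc.prems])
  qed
  then show ?case using d by simp
qed

lemma closed_class:
  assumes "open S"
    and cl: "\<And>g. g \<in> C \<Longrightarrow> (\<forall>x\<in>S. g differentiable (at x)) \<and> (\<forall>i. \<exists>h\<in>C. \<forall>x\<in>S. partial i g x = h x)"
    and "g \<in> C"
  shows "Ck_on m S g"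
  using assms(3)
proof (induction m arbitrary: g)
  case 0
  have "\<forall>x\<in>S. g differentiable (at x)" using cl[OF 0] by (rule conjunct1)
  then have "\<forall>x\<in>S. isCont g x" using differentiable_imp_continuous_within by blast
  then show ?case by (simp add: continuous_at_imp_continuous_on)
next
  case (Suc m)
  have "Ck_on m S (partial i g)" for i
  proof -
    obtain h where h: "h \<in> C" "\<forall>x\<in>S. partial i g x = h x" using cl[OF Suc.prems] by blast
    have "Ck_on m S (partial i g) = Ck_on m S h"
      by (rule Ck_cong[OF assms(1)]) (use h(2) in blast)
    then show ?thesis using Suc.IH[OF h(1)] by simp
  qed
  moreover have "\<forall>x\<in>S. g differentiable (at x)" using cl[OF Suc.prems] by (rule conjunct1)
  ultimately show ?case by simp
qed

lemma quot_deriv: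
  assumes P: "polyfun P" and Q: "polyfun Q" and x: "Q x \<noteq> 0"
  shows "(\<lambda>x. P x / Q x ^ m) differentiable (at x)"
    and "partial i (\<lambda>x. P x / Q x ^ m) x
          = (partial i P x * Q x - real m * P x * partial i Q x) / Q x ^ (m + 1)"
proof -
  have dP: "(P has_derivative frechet_derivative P (at x)) (at x)"
    using polyfun_props[OF P] partial_works by blast
  have dQ: "(Q has_derivative frechet_derivative Q (at x)) (at x)"
    using polyfun_props[OF Q] partial_works by blast
  have D: "((\<lambda>x. P x / Q x ^ m) has_derivative
     (\<lambda>h. (frechet_derivative P (at x) h * Q x ^ m - P x * (of_nat m * frechet_derivative Q (at x) h * Q x ^ (m - 1))) / (Q x ^ m * Q x ^ m))) (at x)"
    using has_derivative_divide'[OF dP has_derivative_power[OF dQ, of m]] x by simp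
  then show "(\<lambda>x. P x / Q x ^ m) differentiable (at x)" unfolding differentiable_def by blast
  have e: "partial i (\<lambda>x. P x / Q x ^ m) x =
     (partial i P x * Q x ^ m - P x * (of_nat m * partial i Q x * Q x ^ (m - 1))) / (Q x ^ m * Q x ^ m)"
    by (subst partial_eq[OF D]) (simp add: partial_def)
  show "partial i (\<lambda>x. P x / Q x ^ m) x
          = (partial i P x * Q x - real m * P x * partial i Q x) / Q x ^ (m + 1)"
    unfolding e
  proof (cases m)
    case 0 then show "(partial i P x * Q x ^ m - P x * (of_nat m * partial i Q x * Q x ^ (m - 1))) / (Q x ^ m * Q x ^ m) =
        (partial i P x * Q x - real m * P x * partial i Q x) / Q x ^ (m + 1)" using x by simp
  next
    case (Suc l)
    let ?a = "partial i P x" and ?b = "partial i Q x"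
    have n: "?a * Q x ^ m - P x * (of_nat m * ?b * Q x ^ (m - 1)) = Q x ^ l * (?a * Q x - real m * P x * ?b)"
      by (simp add: Suc algebra_simps)
    have d: "Q x ^ m * Q x ^ m = Q x ^ l * Q x ^ (m + 1)"
      by (simp add: Suc ac_simps)
    have nz: "Q x ^ l \<noteq> 0" using x by simp
    show "(?a * Q x ^ m - P x * (of_nat m * ?b * Q x ^ (m - 1))) / (Q x ^ m * Q x ^ m) =
        (?a * Q x - real m * P x * ?b) / Q x ^ (m + 1)"
      unfolding n d using nz by (rule nonzero_mult_divide_mult_cancel_left)
  qed
qed

lemma smooth_quot:
  assumes "open S" "polyfun P" "polyfun Q" "\<And>x. x \<in> S \<Longrightarrow> Q x \<noteq> 0"
  shows "smooth_on S (\<lambda>x. P x / Q x)"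
proof -
  define C where "C = {g. \<exists>P m. polyfun P \<and> g = (\<lambda>x. P x / Q x ^ m)}"
  have cl: "(\<forall>x\<in>S. g differentiable (at x)) \<and> (\<forall>i. \<exists>h\<in>C. \<forall>x\<in>S. partial i g x = h x)"
    if "g \<in> C" for g
  proof -
    obtain P m where Pm: "polyfun P" "g = (\<lambda>x. P x / Q x ^ m)" using \<open>g \<in> C\<close> C_def by blast
    have "\<forall>x\<in>S. g differentiable (at x)" using quot_deriv(1)[OF Pm(1) assms(3)] assms(4) Pm by auto
    moreover have "\<exists>h\<in>C. \<forall>x\<in>S. partial i g x = h x" for i
    proof -
      define N where "N = (\<lambda>x. partial i P x * Q x + (- real m) * (P x * partial i Q x))"
      have pp: "polyfun N"
        unfolding N_def using polyfun_props[OF Pm(1)] polyfun_props[OF assms(3)] Pm(1) assms(3)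
        by (intro polyfun.intros) auto
      show ?thesis
      proof (rule bexI)
        show "(\<lambda>x. N x / Q x ^ (m + 1)) \<in> C" unfolding C_def using pp by blast
        show "\<forall>x\<in>S. partial i g x = N x / Q x ^ (m + 1)"
        proof
          fix x assume "x \<in> S"
          then show "partial i g x = N x / Q x ^ (m + 1)"
            unfolding Pm(2) quot_deriv(2)[OF Pm(1) assms(3) assms(4)[OF \<open>x \<in> S\<close>]]
            by (simp add: N_def algebra_simps)
        qed
      qed
    qed
    ultimately show ?thesis by blast
  qed
  have "(\<lambda>x. P x / Q x) \<in> C" unfolding C_def using assms(2)
    by (intro CollectI exI[of _ P] exI[of _ 1]) auto
  then show ?thesis unfolding smooth_on_def using closed_class[OF assms(1) cl] by blast
qed




lemma F_homog:
  assumes "t > 0" shows "F A k (\<lambda>i. t * x i) = t * F A k x"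
  unfolding F_def es_homog using assms by (simp add: field_simps)

lemma F_concave:
  assumes "finite A" "Suc k \<le> card A" "\<And>i. i \<in> A \<Longrightarrow> x i > 0" "\<And>i. i \<in> A \<Longrightarrow> y i > 0"
    "u \<ge> 0" "v \<ge> 0" "u + v = 1"
  shows "u * F A k x + v * F A k y \<le> F A k (\<lambda>i. u * x i + v * y i)"
proof (cases "u = 0")
  case True then show ?thesis using assms by simp
next
  case u: False
  show ?thesis
  proof (cases "v = 0")
    case True then show ?thesis using assms by simp
  next
    case v: False
    have up: "u > 0" and vp: "v > 0" using u v assms by auto
    have "u * F A k x + v * F A k y = F A k (\<lambda>i. u * x i) + F A k (\<lambda>i. v * y i)"
      using F_homog[OF up, of A k x] F_homog[OF vp, of A k y] by simp
    also have "\<dots> \<le> F A k (\<lambda>i. u * x i + v * y i)"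
      using assms up vp by (intro F_super) auto
    finally show ?thesis .
  qed
qed

lemma inv_convex:
  fixes a b u v :: real
  assumes "a > 0" "b > 0" "u \<ge> 0" "v \<ge> 0" "u + v = 1"
  shows "1 / (u * a + v * b) \<le> u / a + v / b"
proof -
  have "convex_on {0<..} (inverse :: real \<Rightarrow> real)"
    by (rule convex_on_inverse) auto
  then have "inverse (u * a + v * b) \<le> u * inverse a + v * inverse b"
    using assms unfolding convex_on_def by (metis greaterThan_iff real_scaleR_def)
  then show ?thesis by (simp add: divide_inverse)
qed

lemma open_pos_cone: "open (pos_cone :: (real^'n::finite) set)"
proof -
  have "pos_cone = (\<Inter>i\<in>UNIV. {x::real^'n. 0 < x $ i})"
    unfolding pos_cone_def by auto
  also have "open \<dots>"
    by (rule open_INT) (auto intro!: open_Collect_less continuous_intros)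
  finally show ?thesis .
qed

lemma pos_comb: "0 < a \<Longrightarrow> 0 < b \<Longrightarrow> 0 \<le> u \<Longrightarrow> 0 \<le> v \<Longrightarrow> u + v = 1 \<Longrightarrow> 0 < u * a + v * (b::real)"
proof (cases "u = 0")
  case True then show "0 < b \<Longrightarrow> u + v = 1 \<Longrightarrow> 0 < u * a + v * b" by simp
next
  case False
  assume "0 < a" "0 < b" "0 \<le> u" "0 \<le> v"
  then have "u * a > 0" "v * b \<ge> 0" using False by (simp_all add: less_imp_le)
  then show ?thesis by simp
qed

lemma convex_pos_cone: "convex (pos_cone :: (real^'n::finite) set)"
  unfolding convex_def pos_cone_def by (auto intro!: pos_comb)

lemma esym_es: "esym_norm m x = es UNIV m (\<lambda>i. x $ i) / real (CARD('n) choose m)"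
  for x :: "real^'n::finite"
  unfolding esym_norm_def es_def by simp




lemma es_lin:
  assumes "finite A" "j \<in> A"
  shows "\<exists>c d. \<forall>y. (\<forall>i\<in>A. i \<noteq> j \<longrightarrow> y i = x i) \<longrightarrow> es A m y = y j * c + d"
proof (cases m)
  case 0 then show ?thesis using assms by (intro exI[of _ 0] exI[of _ 1]) (simp add: es_0)
next
  case (Suc l)
  show ?thesis
  proof (intro exI allI impI)
    fix y assume y: "\<forall>i\<in>A. i \<noteq> j \<longrightarrow> y i = x i"
    have "es (A - {j}) l y = es (A - {j}) l x" "es (A - {j}) (Suc l) y = es (A - {j}) (Suc l) x"
      using y by (auto intro!: es_cong)
    then show "es A m y = y j * es (A - {j}) l x + es (A - {j}) (Suc l) x"
      unfolding Suc es_rec'[OF assms] by simp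
  qed
qed

lemma choose_pos: "k \<le> n \<Longrightarrow> real (n choose k) > 0"
  by simp

lemma f_eq:
  fixes x :: "real^'n::finite"
  assumes "k < CARD('n)"
  shows "esym_norm (k + 1) x / esym_norm k x
     = (real (CARD('n) choose k) / real (CARD('n) choose (k + 1))) * F UNIV k (\<lambda>i. x $ i)"
proof -
  have "real (CARD('n) choose k) > 0" "real (CARD('n) choose (k + 1)) > 0" using assms by auto
  then show ?thesis unfolding esym_es F_def by (simp add: field_simps)
qed

lemma esym_pos:
  fixes x :: "real^'n::finite"
  assumes "k \<le> CARD('n)" "x \<in> pos_cone"
  shows "esym_norm k x > 0"
  unfolding esym_es using assms by (intro divide_pos_pos es_pos) (auto simp: pos_cone_def)

lemma F_vec_pos:
  fixes x :: "real^'n::finite"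
  assumes "Suc k \<le> CARD('n)" "x \<in> pos_cone"
  shows "F UNIV k (\<lambda>i. x $ i) > 0"
  using assms by (intro F_pos) (auto simp: pos_cone_def)

lemma partial_pos:
  fixes x :: "real^'n::finite"
  assumes kn: "k < CARD('n)" and x: "x \<in> pos_cone"
  shows "partial j (\<lambda>x::real^'n. esym_norm (k + 1) x / esym_norm k x) x > 0"
proof -
  define f where "f = (\<lambda>x::real^'n. esym_norm (k + 1) x / esym_norm k x)"
  define cst where "cst = real (CARD('n) choose k) / real (CARD('n) choose (k + 1))"
  have cst: "cst > 0" unfolding cst_def using kn by auto
  have fF: "f y = cst * F UNIV k (\<lambda>i. y $ i)" for y
    unfolding f_def cst_def using f_eq[OF kn] by simp
  define l where "l = (\<lambda>t::real. x + t *\<^sub>R axis j (1::real))"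
  have lc: "l t $ i = (if i = j then x $ j + t else x $ i)" for t i
    unfolding l_def by (simp add: axis_def)
  obtain a b where ab: "\<forall>y. (\<forall>i\<in>UNIV. i \<noteq> j \<longrightarrow> y i = x $ i) \<longrightarrow> es UNIV (Suc k) y = y j * a + b"
    using es_lin[of UNIV j "\<lambda>i. x $ i" "Suc k"] by auto
  obtain c d where cd: "\<forall>y. (\<forall>i\<in>UNIV. i \<noteq> j \<longrightarrow> y i = x $ i) \<longrightarrow> es UNIV k y = y j * c + d"
    using es_lin[of UNIV j "\<lambda>i. x $ i" k] by auto
  define M where "M = (\<lambda>t. cst * (((x $ j + t) * a + b) / ((x $ j + t) * c + d)))"
  have esl1: "es UNIV (Suc k) (\<lambda>i. l t $ i) = (x $ j + t) * a + b" for t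
    using ab lc by simp
  have esl0: "es UNIV k (\<lambda>i. l t $ i) = (x $ j + t) * c + d" for t
    using cd lc by simp
  have fl: "f (l t) = M t" for t
    unfolding fF M_def F_def esl1 esl0 by simp
  have l0: "l 0 = x" unfolding l_def by simp
  have l1: "l 1 \<in> pos_cone" using x unfolding pos_cone_def by (auto simp: lc add_pos_pos)
  have d0: "x $ j * c + d > 0"
    using es_pos[of UNIV k "\<lambda>i. l 0 $ i"] esl0[of 0] kn x l0 by (auto simp: pos_cone_def)
  have d1: "(x $ j + 1) * c + d > 0"
    using es_pos[of UNIV k "\<lambda>i. l 1 $ i"] esl0[of 1] kn l1 by (auto simp: pos_cone_def)
  have "F UNIV k (\<lambda>i. l 0 $ i) < F UNIV k (\<lambda>i. l 1 $ i)"
    using x l1 kn l0 by (intro F_strict[where j=j]) (auto simp: pos_cone_def lc)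
  then have "(x $ j * a + b) / (x $ j * c + d) < ((x $ j + 1) * a + b) / ((x $ j + 1) * c + d)"
    unfolding F_def esl1 esl0 by simp
  then have "(x $ j * a + b) * ((x $ j + 1) * c + d) < ((x $ j + 1) * a + b) * (x $ j * c + d)"
    using d0 d1 by (simp add: divide_simps)
  moreover have "((x $ j + 1) * a + b) * (x $ j * c + d) - (x $ j * a + b) * ((x $ j + 1) * c + d) = a * d - b * c"
    by (simp add: algebra_simps)
  ultimately have adbc: "a * d - b * c > 0" by linarith
  define E where "E = cst * ((a * (x $ j * c + d) - (x $ j * a + b) * c) / (x $ j * c + d)^2)"
  have Epos: "E > 0"
  proof -
    have "a * (x $ j * c + d) - (x $ j * a + b) * c = a * d - b * c" by (simp add: algebra_simps)
    then show ?thesis unfolding E_def using cst adbc d0 by simp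
  qed
  have DM: "(M has_real_derivative E) (at 0)"
    unfolding M_def E_def using d0
    by (auto intro!: derivative_eq_intros simp: field_simps power2_eq_square)
  have Q0: "esym_norm k x \<noteq> 0" using esym_pos[of k x] kn x by simp
  have "(\<lambda>x. esym_norm (k + 1) x / esym_norm k x ^ 1) differentiable (at x)"
    by (rule quot_deriv(1)[OF polyfun_esym polyfun_esym Q0])
  then have "f differentiable (at x)" unfolding f_def by simp
  then have Df: "(f has_derivative frechet_derivative f (at x)) (at (l 0))"
    using l0 partial_works by simp
  have Dl: "(l has_derivative (\<lambda>t. t *\<^sub>R axis j 1)) (at 0)"
    unfolding l_def by (auto intro!: derivative_eq_intros)
  have "((f \<circ> l) has_derivative (frechet_derivative f (at x) \<circ> (\<lambda>t. t *\<^sub>R axis j 1))) (at 0)"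
    by (rule diff_chain_at[OF Dl Df])
  moreover have "f \<circ> l = M" using fl by auto
  ultimately have D1: "(M has_derivative (\<lambda>t. frechet_derivative f (at x) (t *\<^sub>R axis j 1))) (at 0)"
    by (simp add: comp_def)
  have D2: "(M has_derivative (\<lambda>t. E * t)) (at 0)"
    using DM unfolding has_field_derivative_def by simp
  have "(\<lambda>t. frechet_derivative f (at x) (t *\<^sub>R axis j 1)) = (\<lambda>t. E * t)"
    by (rule has_derivative_unique[OF D1 D2])
  then have "frechet_derivative f (at x) (1 *\<^sub>R axis j 1) = E * 1" by metis
  then have "partial j f x = E" unfolding partial_def by simp
  then show ?thesis using Epos unfolding f_def by simp
qed




lemma F_inv_vec:
  fixes w :: "real^'n::finite"
  assumes kn: "k < CARD('n)" and w: "w \<in> pos_cone"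
  shows "F UNIV k (\<lambda>i. inverse (w $ i)) = 1 / F UNIV (CARD('n) - Suc k) (\<lambda>i. w $ i)"
proof -
  have nz: "\<And>i. i \<in> UNIV \<Longrightarrow> w $ i \<noteq> 0" using w by (auto simp: pos_cone_def dest: less_imp_neq[symmetric])
  have P: "(\<Prod>i\<in>UNIV. w $ i) \<noteq> 0" using nz by simp
  have e1: "es UNIV (Suc k) (\<lambda>i. inverse (w $ i)) = es UNIV (CARD('n) - Suc k) (\<lambda>i. w $ i) / (\<Prod>i\<in>UNIV. w $ i)"
    using es_inv[of UNIV "Suc k" "\<lambda>i. w $ i"] kn nz by simp
  have e0: "es UNIV k (\<lambda>i. inverse (w $ i)) = es UNIV (Suc (CARD('n) - Suc k)) (\<lambda>i. w $ i) / (\<Prod>i\<in>UNIV. w $ i)"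
    using es_inv[of UNIV k "\<lambda>i. w $ i"] kn nz Suc_diff_Suc by simp
  show ?thesis unfolding F_def e1 e0 using P by simp
qed

theorem main:
  fixes k :: nat
  assumes kn: "k < CARD('n::finite)"
  shows "class_S (\<lambda>x::real ^ 'n. esym_norm (k + 1) x / esym_norm k x)"
proof -
  define f where "f = (\<lambda>x::real ^ 'n. esym_norm (k + 1) x / esym_norm k x)"
  define cst where "cst = real (CARD('n) choose k) / real (CARD('n) choose (k + 1))"
  have cst: "cst > 0" unfolding cst_def using kn by auto
  have fF: "f y = cst * F UNIV k (\<lambda>i. y $ i)" for y
    unfolding f_def cst_def using f_eq[OF kn] by simp
  have Qnz: "esym_norm k x \<noteq> 0" if "x \<in> pos_cone" for x :: "real^'n"
    using esym_pos[of k x] kn that by simp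
  have smooth: "smooth_on pos_cone f"
    unfolding f_def
    by (rule smooth_quot[OF open_pos_cone polyfun_esym polyfun_esym Qnz])
  have homog: "\<forall>x\<in>pos_cone. \<forall>t>0. f (t *\<^sub>R x) = t * f x"
  proof (intro ballI allI impI)
    fix x :: "real^'n" and t :: real assume "x \<in> pos_cone" "t > 0"
    have e: "vec_nth (t *\<^sub>R x) = (\<lambda>i. t * x $ i)" by (rule ext) simp
    show "f (t *\<^sub>R x) = t * f x" unfolding fF e F_homog[OF \<open>t > 0\<close>] by simp
  qed
  have mono: "\<forall>x\<in>pos_cone. \<forall>i. partial i f x > 0"
    unfolding f_def using partial_pos[OF kn] by blast
  have conc: "concave_on pos_cone f"
    unfolding concave_on_iff
  proof (intro conjI convex_pos_cone ballI allI impI)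
    fix x y :: "real^'n" and u v :: real
    assume xy: "x \<in> pos_cone" "y \<in> pos_cone" and uv: "0 \<le> u" "0 \<le> v" "u + v = 1"
    have "u * F UNIV k (\<lambda>i. x $ i) + v * F UNIV k (\<lambda>i. y $ i) \<le> F UNIV k (\<lambda>i. u * x $ i + v * y $ i)"
      using xy uv kn by (intro F_concave) (auto simp: pos_cone_def)
    then have "cst * (u * F UNIV k (\<lambda>i. x $ i) + v * F UNIV k (\<lambda>i. y $ i)) \<le> cst * F UNIV k (\<lambda>i. u * x $ i + v * y $ i)"
      using cst by (simp add: mult_left_mono)
    moreover have e: "vec_nth (u *\<^sub>R x + v *\<^sub>R y) = (\<lambda>i. u * x $ i + v * y $ i)" by (rule ext) simp
    ultimately show "u * f x + v * f y \<le> f (u *\<^sub>R x + v *\<^sub>R y)"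
      unfolding fF e by (simp add: algebra_simps)
  qed
  define j where "j = CARD('n) - Suc k"
  have jn: "Suc j \<le> CARD('n)" unfolding j_def using kn by simp
  have finv: "f (\<chi> i. inverse (w $ i)) = cst * (1 / F UNIV j (\<lambda>i. w $ i))" if "w \<in> pos_cone" for w
  proof -
    have e: "vec_nth (\<chi> i. inverse (w $ i)) = (\<lambda>i. inverse (w $ i))" by (rule ext) simp
    show ?thesis unfolding fF j_def e using F_inv_vec[OF kn that] by simp
  qed
  have iconc: "concave_on pos_cone (\<lambda>x. - f (\<chi> i. inverse (x $ i)))"
    unfolding concave_on_iff
  proof (intro conjI convex_pos_cone ballI allI impI)
    fix x y :: "real^'n" and u v :: real
    assume xy: "x \<in> pos_cone" "y \<in> pos_cone" and uv: "0 \<le> u" "0 \<le> v" "u + v = 1"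
    have z: "u *\<^sub>R x + v *\<^sub>R y \<in> pos_cone" using convex_pos_cone xy uv unfolding convex_def by blast
    have Fx: "F UNIV j (\<lambda>i. x $ i) > 0" using F_vec_pos[OF jn xy(1)] .
    have Fy: "F UNIV j (\<lambda>i. y $ i) > 0" using F_vec_pos[OF jn xy(2)] .
    have e: "vec_nth (u *\<^sub>R x + v *\<^sub>R y) = (\<lambda>i. u * x $ i + v * y $ i)" by (rule ext) simp
    have sup: "u * F UNIV j (\<lambda>i. x $ i) + v * F UNIV j (\<lambda>i. y $ i) \<le> F UNIV j (\<lambda>i. (u *\<^sub>R x + v *\<^sub>R y) $ i)"
      unfolding e using xy uv jn F_concave[of UNIV j "\<lambda>i. x $ i" "\<lambda>i. y $ i" u v] by (auto simp: pos_cone_def)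
    have mpos: "u * F UNIV j (\<lambda>i. x $ i) + v * F UNIV j (\<lambda>i. y $ i) > 0"
      using pos_comb[OF Fx Fy uv] .
    have "1 / F UNIV j (\<lambda>i. (u *\<^sub>R x + v *\<^sub>R y) $ i) \<le> 1 / (u * F UNIV j (\<lambda>i. x $ i) + v * F UNIV j (\<lambda>i. y $ i))"
      using sup mpos by (intro divide_left_mono) auto
    also have "\<dots> \<le> u / F UNIV j (\<lambda>i. x $ i) + v / F UNIV j (\<lambda>i. y $ i)"
      by (rule inv_convex[OF Fx Fy uv])
    finally have "cst * (1 / F UNIV j (\<lambda>i. (u *\<^sub>R x + v *\<^sub>R y) $ i)) \<le> cst * (u / F UNIV j (\<lambda>i. x $ i) + v / F UNIV j (\<lambda>i. y $ i))"
      by (rule mult_left_mono) (use cst in simp)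
    then show "u * - f (\<chi> i. inverse (x $ i)) + v * - f (\<chi> i. inverse (y $ i))
        \<le> - f (\<chi> i. inverse ((u *\<^sub>R x + v *\<^sub>R y) $ i))"
      unfolding finv[OF xy(1)] finv[OF xy(2)] finv[OF z] unfolding e by (simp add: algebra_simps)
  qed
  have sym: "\<forall>p x. p permutes (UNIV :: 'n set) \<longrightarrow> x \<in> pos_cone \<longrightarrow> f (\<chi> i. x $ p i) = f x"
  proof (intro allI impI)
    fix p :: "'n \<Rightarrow> 'n" and x :: "real^'n" assume "p permutes UNIV"
    then have "bij p" by (rule permutes_bij)
    moreover have e: "vec_nth (\<chi> i. x $ p i) = (\<lambda>i. x $ p i)" by (rule ext) simp
    ultimately show "f (\<chi> i. x $ p i) = f x"
      unfolding fF e using es_perm[of p k "\<lambda>i. x $ i"] es_perm[of p "Suc k" "\<lambda>i. x $ i"]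
      by (simp add: F_def)
  qed
  show ?thesis
    unfolding class_S_def class_C_def f_def[symmetric]
    using smooth homog mono conc iconc sym by blast
qed



theorem theorem2p6:
  fixes k :: nat
  assumes "k < CARD('n::finite)"
  shows "class_S (\<lambda>x::real ^ 'n. esym_norm (k + 1) x / esym_norm k x)"
  using main[OF assms] .

end
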